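(* The recurrence $x_n=x_{n-1}+x_{n-2}+2x_{n-3}$ is not congenial; that is, there is no finite bound $B$ such that for every positive integer $n$, either $t_{1,1,2}(n)=\infty$ or $t_{1,1,2}(n)\le B$.
   Context: For non-negative integers $a,b,c$, a positive $k$-element solution of the recurrence $x_i=ax_{i-1}+bx_{i-2}+cx_{i-3}$ is an integer sequence $\langle x_i\rangle_{i=1}^k$ satisfying the recurrence for $4\le i\le k$ with $x_1,x_2,x_3>0$; it terminates at $x_k$. For a positive integer $n$, $k_{a,b,c}(n)$ is the largest $k$ such that there is a positive $k$-element solution terminating at $n$, and $t_{a,b,c}(n)$ is the number of positive $k_{a,b,c}(n)$-element solutions terminating at $n$. The recurrence is congenial if there is a finite $B$ such that for all $n$, $t_{a,b,c}(n)=\infty$ or $t_{a,b,c}(n)\le B$. *)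

theory Defs
  imports Main "HOL-Library.Extended_Nat"
begin

text \<open>A positive k-element solution x_1,...,x_k is represented as a list xs of
  integers of length k (0-based: xs!0 = x_1).  Since x_1,x_2,x_3 > 0 must be
  meaningful, k \<ge> 3.\<close>

definition pos_solution :: "nat \<Rightarrow> nat \<Rightarrow> nat \<Rightarrow> int list \<Rightarrow> bool" where
  "pos_solution a b c xs \<longleftrightarrow>
     length xs \<ge> 3 \<and> xs ! 0 > 0 \<and> xs ! 1 > 0 \<and> xs ! 2 > 0 \<and>
     (\<forall>i. 3 \<le> i \<and> i < length xs \<longrightarrow>
        xs ! i = int a * xs ! (i - 1) + int b * xs ! (i - 2) + int c * xs ! (i - 3))"

definition sols_ending :: "nat \<Rightarrow> nat \<Rightarrow> nat \<Rightarrow> int \<Rightarrow> nat \<Rightarrow> int list set" where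
  "sols_ending a b c n k = {xs. pos_solution a b c xs \<and> length xs = k \<and> last xs = n}"

definition kmax :: "nat \<Rightarrow> nat \<Rightarrow> nat \<Rightarrow> int \<Rightarrow> nat" where
  "kmax a b c n = (GREATEST k. sols_ending a b c n k \<noteq> {})"

definition tcount :: "nat \<Rightarrow> nat \<Rightarrow> nat \<Rightarrow> int \<Rightarrow> enat" where
  "tcount a b c n =
     (if finite (sols_ending a b c n (kmax a b c n))
      then enat (card (sols_ending a b c n (kmax a b c n))) else \<infinity>)"

definition congenial :: "nat \<Rightarrow> nat \<Rightarrow> nat \<Rightarrow> bool" where
  "congenial a b c \<longleftrightarrow>
     (\<exists>B::nat. \<forall>n::int. n > 0 \<longrightarrow> tcount a b c n = \<infinity> \<or> tcount a b c n \<le> enat B)"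

end

theory Submission
  imports Defs
begin

fun sq :: "int \<Rightarrow> int \<Rightarrow> int \<Rightarrow> nat \<Rightarrow> int" where
  "sq a b c 0 = a"
| "sq a b c (Suc 0) = b"
| "sq a b c (Suc (Suc 0)) = c"
| "sq a b c (Suc (Suc (Suc i))) = sq a b c (Suc (Suc i)) + sq a b c (Suc i) + 2 * sq a b c i"

lemma sq_rec: "sq a b c (i+3) = sq a b c (i+2) + sq a b c (i+1) + 2 * sq a b c i"
  using sq.simps(4)[of a b c i] by (simp add: numeral_eq_Suc)

lemma sq_closed:
  "7 * sq a b c (3*m) = (a+b+c)*(8^m - 1) + 7*a \<and>
   7 * sq a b c (3*m+1) = (a+b+c)*(2*8^m - 2) + 7*b \<and>
   7 * sq a b c (3*m+2) = (a+b+c)*(4*8^m - 4) + 7*c"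
proof (induction m)
  case 0
  then show ?case by (simp add: numeral_eq_Suc)
next
  case (Suc m)
  have e0': "sq a b c (3*m+3) = sq a b c (3*m+2) + sq a b c (3*m+1) + 2 * sq a b c (3*m)"
    by (rule sq_rec)
  have m3: "3*Suc m = 3*m+3" by simp
  have e0: "sq a b c (3*Suc m) = sq a b c (3*m+2) + sq a b c (3*m+1) + 2 * sq a b c (3*m)"
    unfolding m3 by (rule e0')
  have e1: "sq a b c (3*Suc m+1) = sq a b c (3*Suc m) + sq a b c (3*m+2) + 2 * sq a b c (3*m+1)"
  proof -
    have i1: "3*Suc m + 1 = (3*m+1)+3" "3*Suc m = (3*m+1)+2" "3*m+2 = (3*m+1)+1" by simp_all
    show ?thesis using sq_rec[of a b c "3*m+1"] by (metis i1)
  qed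
  have e2: "sq a b c (3*Suc m+2) = sq a b c (3*Suc m+1) + sq a b c (3*Suc m) + 2 * sq a b c (3*m+2)"
  proof -
    have i1: "3*Suc m + 2 = (3*m+2)+3" "3*Suc m+1 = (3*m+2)+2" "3*Suc m = (3*m+2)+1" by simp_all
    show ?thesis using sq_rec[of a b c "3*m+2"] by (metis i1)
  qed
  have A: "7 * sq a b c (3*Suc m) = (a+b+c)*(8^Suc m - 1) + 7*a"
    using Suc.IH e0 by (simp add: algebra_simps)
  have B: "7 * sq a b c (3*Suc m+1) = (a+b+c)*(2*8^Suc m - 2) + 7*b"
    using Suc.IH e1 A by (simp add: algebra_simps)
  have C: "7 * sq a b c (3*Suc m+2) = (a+b+c)*(4*8^Suc m - 4) + 7*c"
    using Suc.IH e2 A B by (simp add: algebra_simps)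
  show ?case using A B C by blast
qed

lemma pos_sol_sq:
  assumes "pos_solution 1 1 2 xs"
  shows "\<forall>i<length xs. xs ! i = sq (xs!0) (xs!1) (xs!2) i"
proof -
  have "i < length xs \<longrightarrow> xs ! i = sq (xs!0) (xs!1) (xs!2) i" for i
  proof (induction i rule: less_induct)
    case (less i)
    show ?case
    proof (cases "i < 3")
      case True
      then have "i = 0 \<or> i = 1 \<or> i = 2" by auto
      then show ?thesis by (auto simp: numeral_eq_Suc)
    next
      case False
      then obtain j where j: "i = j + 3" by (metis add.commute le_Suc_ex not_less)
      show ?thesis
      proof
        assume "i < length xs"
        then have "xs ! i = xs ! (i - 1) + xs ! (i - 2) + 2 * xs ! (i - 3)"
          using assms False unfolding pos_solution_def by auto
        then show "xs ! i = sq (xs!0) (xs!1) (xs!2) i"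
          using less.IH[of "j+2"] less.IH[of "j+1"] less.IH[of j] \<open>i < length xs\<close> j
            sq_rec[of "xs!0" "xs!1" "xs!2" j] by simp
      qed
    qed
  qed
  then show ?thesis by blast
qed

lemma sq_pos: "a > 0 \<Longrightarrow> b > 0 \<Longrightarrow> c > 0 \<Longrightarrow> sq a b c i > 0"
proof (induction i rule: less_induct)
  case (less i)
  show ?case
  proof (cases "i < 3")
    case True
    then have "i = 0 \<or> i = 1 \<or> i = 2" by auto
    then show ?thesis using less.prems by (auto simp: numeral_eq_Suc)
  next
    case False
    then obtain j where j: "i = j + 3" by (metis add.commute le_Suc_ex not_less)
    then show ?thesis using less.IH[of "j+2"] less.IH[of "j+1"] less.IH[of j] less.prems sq_rec[of a b c j] by simp
  qed
qed

lemma sq_sol: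
  assumes "a > 0" "b > 0" "c > 0" "k \<ge> 3"
  shows "pos_solution 1 1 2 (map (sq a b c) [0..<k])"
  unfolding pos_solution_def
proof (intro conjI allI impI)
  fix i assume i: "3 \<le> i \<and> i < length (map (sq a b c) [0..<k])"
  then obtain j where j: "i = j + 3" by (metis add.commute le_Suc_ex)
  show "map (sq a b c) [0..<k] ! i = int 1 * map (sq a b c) [0..<k] ! (i - 1) +
      int 1 * map (sq a b c) [0..<k] ! (i - 2) + int 2 * map (sq a b c) [0..<k] ! (i - 3)"
    using i j sq_rec[of a b c j] by simp
qed (use assms in \<open>auto simp: numeral_eq_Suc\<close>)

lemma pos_sol_drop:
  assumes "pos_solution 1 1 2 xs" "t + 3 \<le> length xs"
  shows "pos_solution 1 1 2 (drop t xs)"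
proof -
  have e: "\<forall>i<length xs. xs ! i = sq (xs!0) (xs!1) (xs!2) i" using pos_sol_sq[OF assms(1)] .
  have p: "xs!0 > 0" "xs!1 > 0" "xs!2 > 0" using assms(1) unfolding pos_solution_def by auto
  have pos: "\<And>i. i < length xs \<Longrightarrow> xs ! i > 0" using e sq_pos[OF p] by simp
  show ?thesis unfolding pos_solution_def
  proof (intro conjI allI impI)
    fix i assume i: "3 \<le> i \<and> i < length (drop t xs)"
    then show "drop t xs ! i = int 1 * drop t xs ! (i - 1) + int 1 * drop t xs ! (i - 2) + int 2 * drop t xs ! (i - 3)"
      using assms(1) unfolding pos_solution_def
      by (auto simp: add.commute[of t] dest!: spec[of _ "t+i"])
  qed (use assms pos in auto)
qed

lemma eight_pow: "\<exists>d::int. 8^p = 7*d+1 \<and> d \<ge> int p"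
proof (induction p)
  case 0 then show ?case by simp
next
  case (Suc p)
  then obtain d::int where "8^p = 7*d+1" "d \<ge> int p" by blast
  then show ?case by (intro exI[of _ "8*d+1"]) auto
qed

lemma last_idx: "xs \<noteq> [] \<Longrightarrow> last xs = xs ! (length xs - 1)"
  by (simp add: last_conv_nth)

lemma sol_first3:
  assumes "pos_solution 1 1 2 xs"
  shows "xs = map (sq (xs!0) (xs!1) (xs!2)) [0..<length xs]"
  using pos_sol_sq[OF assms] by (intro nth_equalityI) auto

theorem lemma6:
  shows "\<not> congenial 1 1 2"
proof
  assume "congenial 1 1 2"
  then obtain B :: nat where HB: "\<forall>n::int. n > 0 \<longrightarrow> tcount 1 1 2 n = \<infinity> \<or> tcount 1 1 2 n \<le> enat B"
    unfolding congenial_def by blast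
  define p where "p = B + 1"
  obtain d :: int where d8: "8^p = 7*d+1" and dp: "d \<ge> int p" using eight_pow by blast
  have d1: "d \<ge> 1" using dp p_def by simp
  define k where "k = 3*p+3"
  define n :: int where "n = 32*d^2+1"
  define sol where "sol a = map (sq a (8*d-1-a) 1) [0..<k]" for a
  have lastk: "k - 1 = 3*p+2" unfolding k_def by simp
  have lastform: "last xs = 4*d*(xs!0+xs!1+xs!2) + xs!2" if "pos_solution 1 1 2 xs" "length xs = k" for xs
  proof -
    have ne: "xs \<noteq> []" using that k_def by auto
    have li: "length xs - 1 = 3*p+2" using that(2) lastk by simp
    have lt: "3*p+2 < length xs" using that(2) k_def by simp
    have "last xs = xs ! (3*p+2)" using last_idx[OF ne] li by simp
    also have "\<dots> = sq (xs!0) (xs!1) (xs!2) (3*p+2)"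
      using pos_sol_sq[OF that(1)] lt by blast
    finally have L: "last xs = sq (xs!0) (xs!1) (xs!2) (3*p+2)" .
    have "7 * sq (xs!0) (xs!1) (xs!2) (3*p+2) = (xs!0+xs!1+xs!2)*(4*8^p - 4) + 7*(xs!2)"
      using sq_closed by blast
    also have "\<dots> = 7 * (4*d*(xs!0+xs!1+xs!2) + xs!2)" unfolding d8 by (simp add: algebra_simps)
    finally show ?thesis using L by simp
  qed
  have solin: "sol a \<in> sols_ending 1 1 2 n k" if "a \<in> {1..8*d-2}" for a
  proof -
    have ps: "pos_solution 1 1 2 (sol a)" unfolding sol_def using that k_def
      by (intro sq_sol) auto
    have len: "length (sol a) = k" unfolding sol_def by simp
    have "sol a ! 0 = a" "sol a ! 1 = 8*d-1-a" "sol a ! 2 = 1"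
    proof -
      have "\<And>i. i < k \<Longrightarrow> sol a ! i = sq a (8*d-1-a) 1 i" unfolding sol_def by simp
      moreover have "k > 2" unfolding k_def by simp
      ultimately show "sol a ! 0 = a" "sol a ! 1 = 8*d-1-a" "sol a ! 2 = 1"
        by (auto simp: numeral_eq_Suc)
    qed
    then have "last (sol a) = 4*d*(8*d) + 1" using lastform[OF ps len] by simp
    then have "last (sol a) = n" unfolding n_def by (simp add: power2_eq_square)
    then show ?thesis using ps len unfolding sols_ending_def by simp
  qed
  have injs: "inj_on sol {1..8*d-2}"
  proof
    fix a b assume "a \<in> {1..8*d-2}" "b \<in> {1..8*d-2}" "sol a = sol b"
    then have "sol a ! 0 = sol b ! 0" by simp
    moreover have "k > 0" unfolding k_def by simp
    ultimately show "a = b" unfolding sol_def by simp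
  qed
  have nolong: "False" if "pos_solution 1 1 2 xs" "length xs \<ge> k+1" "last xs = n" for xs
  proof -
    define ys where "ys = drop (length xs - (k+1)) xs"
    have ps: "pos_solution 1 1 2 ys" unfolding ys_def
      using pos_sol_drop[OF that(1), of "length xs - (k+1)"] that(2) k_def by linarith
    have len: "length ys = 3*(p+1)+1" unfolding ys_def k_def using that(2) k_def by simp
    have ly: "last ys = n" unfolding ys_def using that(2,3) k_def
      by (simp add: last_drop)
    have ne: "ys \<noteq> []" using len by auto
    have li: "length ys - 1 = 3*(p+1)" using len by simp
    have lt: "3*(p+1) < length ys" using len by simp
    have "last ys = ys ! (3*(p+1))" using last_idx[OF ne] li by simp
    also have "\<dots> = sq (ys!0) (ys!1) (ys!2) (3*(p+1))"
      using pos_sol_sq[OF ps] lt by blast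
    finally have L: "last ys = sq (ys!0) (ys!1) (ys!2) (3*(p+1))" .
    have "7 * sq (ys!0) (ys!1) (ys!2) (3*(p+1)) = (ys!0+ys!1+ys!2)*(8^(p+1) - 1) + 7*(ys!0)"
      using sq_closed by blast
    also have "\<dots> = 7*((8*d+1)*(ys!0+ys!1+ys!2) + ys!0)" unfolding power_Suc2 Suc_eq_plus1[symmetric] d8
      by (simp add: algebra_simps)
    finally have eq: "n = (8*d+1)*(ys!0+ys!1+ys!2) + ys!0" using ly L by simp
    have pos: "ys!0 > 0" "ys!1 > 0" "ys!2 > 0" using ps unfolding pos_solution_def by auto
    define S where "S = ys!0+ys!1+ys!2"
    have e1: "(8*d+1)*S + 1 \<le> 32*d^2+1" using eq pos n_def S_def by simp
    have e2: "32*d^2+1 \<le> (8*d+2)*S - 2" using eq pos n_def S_def by (simp add: algebra_simps)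
    have "S \<le> 4*d - 1"
    proof (rule ccontr)
      assume "\<not> S \<le> 4*d-1"
      then have "S \<ge> 4*d" by simp
      then have "(8*d+1)*S \<ge> (8*d+1)*(4*d)" using d1 by (intro mult_left_mono) auto
      then show False using e1 d1 by (simp add: algebra_simps power2_eq_square)
    qed
    then have "(8*d+2)*S \<le> (8*d+2)*(4*d-1)" using d1 by (intro mult_left_mono) auto
    then show False using e2 by (simp add: algebra_simps power2_eq_square)
  qed
  have kmx: "kmax 1 1 2 n = k"
    unfolding kmax_def
  proof (rule Greatest_equality)
    show "sols_ending 1 1 2 n k \<noteq> {}" using solin[of 1] d1 by auto
  next
    fix y assume "sols_ending 1 1 2 n y \<noteq> {}"
    then obtain xs where "pos_solution 1 1 2 xs" "length xs = y" "last xs = n"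
      unfolding sols_ending_def by auto
    then show "y \<le> k" using nolong by force
  qed
  have fin: "finite (sols_ending 1 1 2 n k)"
  proof -
    have "sols_ending 1 1 2 n k \<subseteq> (\<lambda>(a,b,c). map (sq a b c) [0..<k]) ` ({1..n}\<times>{1..n}\<times>{1..n})"
    proof
      fix xs assume "xs \<in> sols_ending 1 1 2 n k"
      then have ps: "pos_solution 1 1 2 xs" and len: "length xs = k" and l: "last xs = n"
        unfolding sols_ending_def by auto
      have pos: "xs!0 > 0" "xs!1 > 0" "xs!2 > 0" using ps unfolding pos_solution_def by auto
      have ln: "n = 4*d*(xs!0+xs!1+xs!2) + xs!2" using lastform[OF ps len] l by simp
      have "4*d*(xs!0+xs!1+xs!2) \<ge> xs!0+xs!1+xs!2" using d1 pos
        by (simp add: mult_right_mono)  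
      then have "xs!0 \<le> n" "xs!1 \<le> n" "xs!2 \<le> n" using ln pos by linarith+
      then have "(xs!0, xs!1, xs!2) \<in> {1..n}\<times>{1..n}\<times>{1..n}" using pos by auto
      moreover have "xs = map (sq (xs!0) (xs!1) (xs!2)) [0..<k]" using sol_first3[OF ps] len by simp
      ultimately show "xs \<in> (\<lambda>(a,b,c). map (sq a b c) [0..<k]) ` ({1..n}\<times>{1..n}\<times>{1..n})"
        by (intro image_eqI[of _ _ "(xs!0, xs!1, xs!2)"]) auto
    qed
    then show ?thesis by (rule finite_subset) auto
  qed
  have "card (sol ` {1..8*d-2}) = nat (8*d-2)" using card_image[OF injs] by simp
  moreover have "sol ` {1..8*d-2} \<subseteq> sols_ending 1 1 2 n k" using solin by auto
  ultimately have cge: "card (sols_ending 1 1 2 n k) \<ge> nat (8*d-2)"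
    using card_mono[OF fin] by metis
  have "nat (8*d-2) > B" using dp p_def by simp
  then have cg: "card (sols_ending 1 1 2 n k) > B" using cge by simp
  have tc: "tcount 1 1 2 n = enat (card (sols_ending 1 1 2 n k))"
    unfolding tcount_def kmx using fin by simp
  have "n > 0" unfolding n_def by simp
  then show False using HB tc cg by auto
qed

end
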